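(* Let $l\ge-\tfrac12$. There exist constants $C_1,\dots,C_6$ depending only on $l$ such that for all $0<\eta<\xi$: $$V_1(z;\xi,\eta)\le C_1\frac{(z-\eta)^l\xi^l}{z^{2l}},\quad z\in\left(\tfrac{2\xi\eta}{\xi+\eta},\xi\right);$$ $$V_1(z;\xi,\eta)\le C_2\frac{(\xi-z)^l\eta^l}{z^{2l}}\left(\log\frac{(\xi-z)\eta}{(z-\eta)\xi}+C_3\right),\quad z\in\left(\eta,\tfrac{2\xi\eta}{\xi+\eta}\right);$$ $$V_2(z;\xi,\eta)\le C_4\frac{(\xi-\eta)^{1+2l}z}{\xi^{1+l}(\eta-z)^{1+l}},\quad z\in\left(0,\tfrac{\xi\eta}{2\xi-\eta}\right);$$ $$V_2(z;\xi,\eta)\le C_5\frac{(\xi-\eta)^l}{z^l}\left(\log\frac{z(\xi-\eta)}{\xi(\eta-z)}+C_6\right),\quad z\in\left(\tfrac{\xi\eta}{2\xi-\eta},\eta\right).$$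
   Context: Let ${}_2F_1$ denote the Gauss hypergeometric function (analytically continued to $(-\infty,0)$). For $0<\eta<z<\xi$ put $\sigma_1=\frac{(z-\xi)\eta}{(z-\eta)\xi}\in(-\infty,0)$ and $$V_1(z;\xi,\eta)=\frac{(z-\eta)^l\xi^l}{z^{2l}}\left|{}_2F_1(-l,-l;1;\sigma_1)\right|.$$ For $0<z<\eta<\xi$ put $\sigma_2=-\frac{z(\xi-\eta)}{\xi(\eta-z)}\in(-\infty,0)$ and $$V_2(z;\xi,\eta)=\frac{|\sin(\pi l)|\,\Gamma^2(1+l)}{\pi\,\Gamma(2+2l)}\frac{(\xi-\eta)^{1+2l}z}{\xi^{l+1}(\eta-z)^{l+1}}\left|{}_2F_1(1+l,1+l;2+2l;\sigma_2)\right|.$$ (These are the moduli $|v_1(z,0;\xi,\eta)|$, $|v_2(z,0;\xi,\eta)|$ of the two branches of the Riemann function of the relevant Goursat problem.) *)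

theory Defs
  imports "HOL-Analysis.Analysis"
begin

definition hyp2F1_series :: "real \<Rightarrow> real \<Rightarrow> real \<Rightarrow> real \<Rightarrow> real" where
  "hyp2F1_series a b c x =
     (\<Sum>n. pochhammer a n * pochhammer b n / (pochhammer c n * fact n) * x ^ n)"

text \<open>Gauss hypergeometric function; on the negative half-line it is the analytic
  continuation, given there by the Pfaff transformation
  F(a,b;c;x) = (1-x)^(-a) F(a,c-b;c;x/(x-1)), where x/(x-1) lies in (0,1).
  Only used for x < 0.\<close>
definition hyp2F1 :: "real \<Rightarrow> real \<Rightarrow> real \<Rightarrow> real \<Rightarrow> real" where
  "hyp2F1 a b c x =
     (if x < 0 then (1 - x) powr (- a) * hyp2F1_series a (c - b) c (x / (x - 1))
      else hyp2F1_series a b c x)"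

definition V1 :: "real \<Rightarrow> real \<Rightarrow> real \<Rightarrow> real \<Rightarrow> real" where
  "V1 l z \<xi> \<eta> =
     (let \<sigma> = ((z - \<xi>) * \<eta>) / ((z - \<eta>) * \<xi>) in
      (z - \<eta>) powr l * \<xi> powr l / z powr (2 * l) * \<bar>hyp2F1 (- l) (- l) 1 \<sigma>\<bar>)"

definition V2 :: "real \<Rightarrow> real \<Rightarrow> real \<Rightarrow> real \<Rightarrow> real" where
  "V2 l z \<xi> \<eta> =
     (let \<sigma> = - (z * (\<xi> - \<eta>)) / (\<xi> * (\<eta> - z)) in
      \<bar>sin (pi * l)\<bar> * (Gamma (1 + l))\<^sup>2 / (pi * Gamma (2 + 2 * l)) *
      ((\<xi> - \<eta>) powr (1 + 2 * l) * z / (\<xi> powr (l + 1) * (\<eta> - z) powr (l + 1))) *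
      \<bar>hyp2F1 (1 + l) (1 + l) (2 + 2 * l) \<sigma>\<bar>)"

end

theory Submission
  imports Defs
begin

lemma evdec_bounded:
  fixes g :: "nat \<Rightarrow> real"
  assumes "\<And>n. n \<ge> N \<Longrightarrow> g (Suc n) \<le> g n"
  shows "\<exists>M. \<forall>n. g n \<le> M"
proof -
  have A: "g n \<le> g N" if "n \<ge> N" for n
    using that
  proof (induction n rule: dec_induct)
    case base then show ?case by simp
  next
    case (step m) then show ?case using assms[of m] by linarith
  qed
  show ?thesis
  proof (intro exI allI)
    fix n
    show "g n \<le> Max (g ` {..N})"
    proof (cases "n \<le> N")
      case True then show ?thesis by (intro Max_ge) auto
    next
      case False
      then have "g n \<le> g N" using A by simp
      also have "\<dots> \<le> Max (g ` {..N})" by (intro Max_ge) auto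
      finally show ?thesis .
    qed
  qed
qed

definition hcoef :: "real \<Rightarrow> real \<Rightarrow> real \<Rightarrow> nat \<Rightarrow> real" where
  "hcoef a b c n = pochhammer a n * pochhammer b n / (pochhammer c n * fact n)"

lemma hcoef_Suc:
  assumes "c > 0"
  shows "hcoef a b c (Suc n) = hcoef a b c n * ((a + n) * (b + n) / ((c + n) * (n + 1)))"
proof -
  have "pochhammer c n > 0" using assms by (simp add: pochhammer_pos)
  moreover have "c + n > 0" using assms by simp
  ultimately show ?thesis
    unfolding hcoef_def by (simp add: pochhammer_Suc field_simps)
qed

lemma ratio_ineq:
  fixes p q s x :: real
  assumes s: "s = \<bar>q\<bar> + 1" and x: "x \<ge> \<bar>p\<bar> + \<bar>q\<bar> + \<bar>s * (p - q) - q\<bar> + 1"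
  shows "(x*x + p*x + q) * (x + s + 1) \<le> (x + s) * (x*x + (p+1)*x + p)"
    and "x*x + p*x + q > 0"
proof -
  have eq: "(x + s) * (x*x + (p+1)*x + p) - (x*x + p*x + q) * (x + s + 1)
     = (s - q) * x + (s * (p - q) - q)"
    by (simp add: algebra_simps)
  have "(s - q) * x \<ge> x" using s x
    by (intro mult_right_mono[where c=x, of 1 "s - q", simplified]) auto
  then have "(s - q) * x + (s * (p - q) - q) \<ge> 0" using x by linarith
  then show "(x*x + p*x + q) * (x + s + 1) \<le> (x + s) * (x*x + (p+1)*x + p)"
    using eq by linarith
  have "x - \<bar>p\<bar> \<ge> 1" using x by linarith
  then have "x * (x - \<bar>p\<bar>) \<ge> x * 1" using x by (intro mult_left_mono) auto
  moreover have "p * x \<ge> - \<bar>p\<bar> * x" using x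
    by (intro mult_right_mono) auto
  moreover have "q \<ge> -\<bar>q\<bar>" by simp
  ultimately show "x*x + p*x + q > 0" using x by (simp add: algebra_simps)
qed


lemma hcoef_bound:
  assumes c: "c > 0" "c = a + b"
  shows "\<exists>M. \<forall>n. \<bar>hcoef a b c n\<bar> \<le> M / (real n + 1)"
proof -
  define p where "p = a + b"
  define q where "q = a * b"
  define s where "s = \<bar>q\<bar> + 1"
  define N where "N = nat \<lceil>\<bar>p\<bar> + \<bar>q\<bar> + \<bar>s * (p - q) - q\<bar> + 1\<rceil>"
  define g where "g n = \<bar>hcoef a b c n\<bar> * (real n + s)" for n
  have dec: "g (Suc n) \<le> g n" if "n \<ge> N" for n
  proof -
    define x where "x = real n"
    have xb: "x \<ge> \<bar>p\<bar> + \<bar>q\<bar> + \<bar>s * (p - q) - q\<bar> + 1"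
      using that unfolding x_def N_def by linarith
    note R = ratio_ineq[OF s_def xb]
    have num: "(a + n) * (b + n) = x*x + p*x + q" unfolding x_def p_def q_def by (simp add: algebra_simps)
    have den: "(c + n) * (n + 1) = x*x + (p+1)*x + p" unfolding x_def p_def using c by (simp add: algebra_simps)
    have "(c + n) * (n + 1) > 0" using c(1) by (intro mult_pos_pos) auto
    then have denpos: "x*x + (p+1)*x + p > 0" using den by simp
    have rpos: "(x*x + p*x + q) / (x*x + (p+1)*x + p) > 0" using R(2) denpos by simp
    have "g (Suc n) = \<bar>hcoef a b c n * ((x*x + p*x + q) / (x*x + (p+1)*x + p))\<bar> * (x + s + 1)"
      unfolding g_def hcoef_Suc[OF c(1)] num den[symmetric] by (simp add: x_def algebra_simps)
    also have "\<dots> = \<bar>hcoef a b c n\<bar> * ((x*x + p*x + q) / (x*x + (p+1)*x + p) * (x + s + 1))"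
      using rpos R(2) denpos by (simp add: abs_mult)
    also have "\<dots> \<le> \<bar>hcoef a b c n\<bar> * (x + s)"
    proof (rule mult_left_mono)
      show "(x*x + p*x + q) / (x*x + (p+1)*x + p) * (x + s + 1) \<le> x + s"
        using R(1) denpos by (simp add: field_simps)
    qed simp
    finally show ?thesis unfolding g_def x_def .
  qed
  obtain M where M: "\<And>n. g n \<le> M" using evdec_bounded[of N g, OF dec] by blast
  show ?thesis
  proof (intro exI allI)
    fix n
    have "\<bar>hcoef a b c n\<bar> * (real n + 1) \<le> g n"
      unfolding g_def s_def by (intro mult_left_mono) auto
    also have "\<dots> \<le> M" by (rule M)
    finally show "\<bar>hcoef a b c n\<bar> \<le> M / (real n + 1)" by (simp add: field_simps)
  qed
qed


lemma log_sums:
  fixes w :: real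
  assumes "0 \<le> w" "w < 1"
  shows "(\<lambda>n. if n = 0 then 1 else w ^ n / real n) sums (1 - ln (1 - w))"
proof -
  have "(\<lambda>n. - ((-(-w))^n) / of_nat n) sums ln (1 + (-w))"
    by (rule ln_series') (use assms in auto)
  then have "(\<lambda>n. - (w^n / real n)) sums ln (1 - w)" by simp
  then have A: "(\<lambda>n. w^n / real n) sums (- ln (1 - w))"
    using sums_minus by fastforce
  have B: "(\<lambda>n. if n = 0 then 1 else 0) sums (1::real)"
    using sums_single[of 0 "\<lambda>_. 1::real"] by simp
  have "(\<lambda>n. (if n = 0 then 1 else 0) + w^n / real n) sums (1 + - ln (1 - w))"
    by (rule sums_add[OF B A])
  moreover have "(\<lambda>n. (if n = 0 then 1 else 0) + w^n / real n) = (\<lambda>n. if n = 0 then 1 else w ^ n / real n)"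
    by (rule ext) simp
  ultimately show ?thesis by simp
qed

lemma series_bound:
  assumes M: "\<And>n. \<bar>hcoef a b c n\<bar> \<le> M / (real n + 1)" and w: "0 \<le> w" "w < 1"
  shows "\<bar>hyp2F1_series a b c w\<bar> \<le> M * (1 - ln (1 - w))"
proof -
  define f where "f n = (if n = 0 then 1 else w ^ n / real n)" for n
  have fs: "f sums (1 - ln (1 - w))" unfolding f_def by (rule log_sums[OF w])
  have M0: "M \<ge> 0" using M[of 0] by (simp add: hcoef_def)
  have bnd: "norm (hcoef a b c n * w ^ n) \<le> M * f n" for n
  proof -
    have "norm (hcoef a b c n * w ^ n) = \<bar>hcoef a b c n\<bar> * w ^ n" using w by (simp add: abs_mult)
    also have "\<dots> \<le> M / (real n + 1) * w ^ n" using w by (intro mult_right_mono M) auto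
    also have "\<dots> \<le> M * f n"
    proof (cases "n = 0")
      case True then show ?thesis by (simp add: f_def)
    next
      case False
      have "M / (real n + 1) \<le> M / real n" using False M0 by (intro divide_left_mono) auto
      then have "M / (real n + 1) * w ^ n \<le> M / real n * w ^ n" using w by (intro mult_right_mono) auto
      then show ?thesis using False by (simp add: f_def)
    qed
    finally show ?thesis .
  qed
  have sMf: "summable (\<lambda>n. M * f n)" using fs by (intro summable_mult) (auto simp: sums_iff)
  have sn: "summable (\<lambda>n. norm (hcoef a b c n * w ^ n))"
    by (rule summable_comparison_test[OF _ sMf]) (use bnd in auto)
  have eq: "hyp2F1_series a b c w = (\<Sum>n. hcoef a b c n * w ^ n)"
    unfolding hyp2F1_series_def hcoef_def ..
  have "\<bar>hyp2F1_series a b c w\<bar> \<le> (\<Sum>n. norm (hcoef a b c n * w ^ n))"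
    unfolding eq using summable_norm[OF sn] by simp
  also have "\<dots> \<le> (\<Sum>n. M * f n)" by (rule suminf_le[OF bnd sn sMf])
  also have "\<dots> = M * (1 - ln (1 - w))" using fs by (simp add: sums_iff suminf_mult)
  finally show ?thesis .
qed


lemma pfaff_bound:
  assumes M: "\<And>n. \<bar>hcoef a (c - b) c n\<bar> \<le> M / (real n + 1)" and s: "\<sigma> < 0"
  shows "\<bar>hyp2F1 a b c \<sigma>\<bar> \<le> (1 - \<sigma>) powr (- a) * (M * (1 + ln (1 - \<sigma>)))"
proof -
  define w where "w = \<sigma> / (\<sigma> - 1)"
  have w: "0 \<le> w" "w < 1" using s unfolding w_def by (auto simp: field_simps)
  have w1: "1 - w = 1 / (1 - \<sigma>)" using s unfolding w_def by (simp add: field_simps)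
  have l: "ln (1 - w) = - ln (1 - \<sigma>)" unfolding w1 using s by (simp add: ln_div)
  have "\<bar>hyp2F1 a b c \<sigma>\<bar> = (1 - \<sigma>) powr (- a) * \<bar>hyp2F1_series a (c - b) c w\<bar>"
    using s unfolding hyp2F1_def w_def by (simp add: abs_mult)
  also have "\<dots> \<le> (1 - \<sigma>) powr (- a) * (M * (1 - ln (1 - w)))"
    by (intro mult_left_mono series_bound[OF M w]) auto
  finally show ?thesis unfolding l by simp
qed

lemma powr_le_2abs:
  fixes X l :: real
  assumes "1 \<le> X" "X \<le> 2"
  shows "X powr l \<le> 2 powr \<bar>l\<bar>"
proof (cases "l \<ge> 0")
  case True
  then have "X powr l \<le> 2 powr l" using assms by (intro powr_mono2) auto
  then show ?thesis using True by simp
next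
  case False
  then have "X powr l \<le> X powr 0" using assms by (intro powr_mono) auto
  then have "X powr l \<le> 1" using assms by simp
  also have "1 \<le> 2 powr \<bar>l\<bar>" by (intro ge_one_powr_ge_zero) auto
  finally show ?thesis .
qed


lemma part1:
  assumes H: "\<And>n. \<bar>hcoef (-l) (1 - - l) 1 n\<bar> \<le> M / (real n + 1)"
    and e: "0 < \<eta>" "\<eta> < \<xi>" and z: "2 * \<xi> * \<eta> / (\<xi> + \<eta>) < z" "z < \<xi>"
  shows "V1 l z \<xi> \<eta> \<le> (2 powr \<bar>l\<bar> * (M * 2)) * ((z - \<eta>) powr l * \<xi> powr l / z powr (2 * l))"
proof -
  have M0: "M \<ge> 0" using H[of 0] by (simp add: hcoef_def)
  have zz: "2 * \<xi> * \<eta> < z * (\<xi> + \<eta>)" using z(1) e by (simp add: divide_less_eq)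
  have ze: "\<eta> < z"
  proof (rule ccontr)
    assume "\<not> \<eta> < z"
    then have "z * (\<xi> + \<eta>) \<le> \<eta> * (\<xi> + \<eta>)" using e by (intro mult_right_mono) auto
    then have "z * \<xi> + z * \<eta> \<le> \<eta> * \<xi> + \<eta> * \<eta>" by (simp add: algebra_simps)
    moreover have "\<eta> * \<eta> < \<eta> * \<xi>" using e by simp
    moreover have "2 * \<xi> * \<eta> < z * \<xi> + z * \<eta>" using zz by (simp add: algebra_simps)
    ultimately show False by (simp add: mult.commute)
  qed
  define \<sigma> where "\<sigma> = ((z - \<xi>) * \<eta>) / ((z - \<eta>) * \<xi>)"
  have den: "(z - \<eta>) * \<xi> > 0" using ze e by simp
  have s0: "\<sigma> < 0" unfolding \<sigma>_def using den z e by (simp add: divide_neg_pos mult_neg_pos)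
  have s1: "1 - \<sigma> \<le> 2"
  proof -
    have "- ((z - \<xi>) * \<eta>) \<le> (z - \<eta>) * \<xi>" using zz by (simp add: algebra_simps)
    then have "- 1 \<le> \<sigma>" unfolding \<sigma>_def using den by (simp add: le_divide_eq)
    then show ?thesis by simp
  qed
  have F: "\<bar>hyp2F1 (-l) (-l) 1 \<sigma>\<bar> \<le> (1 - \<sigma>) powr l * (M * (1 + ln (1 - \<sigma>)))"
    using pfaff_bound[where a="-l" and b="-l" and c=1 and M=M and \<sigma>=\<sigma>, OF H s0] by simp
  have "ln (1 - \<sigma>) \<le> (1 - \<sigma>) - 1" using s0 by (intro ln_le_minus_one) auto
  then have L: "1 + ln (1 - \<sigma>) \<le> 2" using s1 by simp
  have "(1 - \<sigma>) powr l * (M * (1 + ln (1 - \<sigma>))) \<le> 2 powr \<bar>l\<bar> * (M * 2)"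
  proof (rule mult_mono)
    show "(1 - \<sigma>) powr l \<le> 2 powr \<bar>l\<bar>" using s0 s1 by (intro powr_le_2abs) auto
    show "M * (1 + ln (1 - \<sigma>)) \<le> M * 2" using L M0 by (intro mult_left_mono) auto
  qed (use M0 s0 in auto)
  with F have F2: "\<bar>hyp2F1 (-l) (-l) 1 \<sigma>\<bar> \<le> 2 powr \<bar>l\<bar> * (M * 2)" by linarith
  have P0: "(z - \<eta>) powr l * \<xi> powr l / z powr (2 * l) \<ge> 0" by simp
  have "V1 l z \<xi> \<eta> = ((z - \<eta>) powr l * \<xi> powr l / z powr (2 * l)) * \<bar>hyp2F1 (-l) (-l) 1 \<sigma>\<bar>"
    unfolding V1_def Let_def \<sigma>_def ..
  also have "\<dots> \<le> ((z - \<eta>) powr l * \<xi> powr l / z powr (2 * l)) * (2 powr \<bar>l\<bar> * (M * 2))"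
    by (rule mult_left_mono[OF F2 P0])
  finally show ?thesis by (simp add: mult_ac)
qed


lemma part2:
  assumes H: "\<And>n. \<bar>hcoef (-l) (1 - - l) 1 n\<bar> \<le> M / (real n + 1)"
    and e: "0 < \<eta>" "\<eta> < \<xi>" and z: "\<eta> < z" "z < 2 * \<xi> * \<eta> / (\<xi> + \<eta>)"
  shows "V1 l z \<xi> \<eta> \<le> (2 powr \<bar>l\<bar> * M) * ((\<xi> - z) powr l * \<eta> powr l / z powr (2 * l)) *
         (ln (((\<xi> - z) * \<eta>) / ((z - \<eta>) * \<xi>)) + 2)"
proof -
  have M0: "M \<ge> 0" using H[of 0] by (simp add: hcoef_def)
  have zz: "z * (\<xi> + \<eta>) < 2 * \<xi> * \<eta>" using z(2) e by (simp add: less_divide_eq)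
  have zx: "z < \<xi>"
  proof (rule ccontr)
    assume "\<not> z < \<xi>"
    then have "\<xi> * (\<xi> + \<eta>) \<le> z * (\<xi> + \<eta>)" using e by (intro mult_right_mono) auto
    then have "\<xi> * \<xi> + \<xi> * \<eta> \<le> z * \<xi> + z * \<eta>" by (simp add: algebra_simps)
    moreover have "\<eta> * \<xi> < \<xi> * \<xi>" using e by simp
    moreover have "z * \<xi> + z * \<eta> < 2 * \<xi> * \<eta>" using zz by (simp add: algebra_simps)
    ultimately show False by (simp add: mult.commute)
  qed
  define r where "r = ((\<xi> - z) * \<eta>) / ((z - \<eta>) * \<xi>)"
  define \<sigma> where "\<sigma> = ((z - \<xi>) * \<eta>) / ((z - \<eta>) * \<xi>)"
  have den: "(z - \<eta>) * \<xi> > 0" using z e by simp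
  have "(z - \<xi>) * \<eta> = - ((\<xi> - z) * \<eta>)" by (simp add: algebra_simps)
  then have sr: "\<sigma> = - r" unfolding \<sigma>_def r_def by (simp only: minus_divide_left)
  have r1: "r > 1"
  proof -
    have "(z - \<eta>) * \<xi> < (\<xi> - z) * \<eta>" using zz by (simp add: algebra_simps)
    then show ?thesis unfolding r_def using den by (simp add: less_divide_eq)
  qed
  have s0: "\<sigma> < 0" using sr r1 by simp
  have F: "\<bar>hyp2F1 (-l) (-l) 1 \<sigma>\<bar> \<le> (1 + r) powr l * (M * (1 + ln (1 + r)))"
    using pfaff_bound[where a="-l" and b="-l" and c=1 and M=M and \<sigma>=\<sigma>, OF H s0] sr by simp
  define t where "t = (1 + r) / r"
  have t: "1 \<le> t" "t \<le> 2" using r1 unfolding t_def by (auto simp: field_simps)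
  have rt: "1 + r = r * t" using r1 unfolding t_def by simp
  have A: "(1 + r) powr l \<le> r powr l * 2 powr \<bar>l\<bar>"
  proof -
    have "(1 + r) powr l = r powr l * t powr l" unfolding rt using r1 t by (simp add: powr_mult)
    also have "\<dots> \<le> r powr l * 2 powr \<bar>l\<bar>" by (intro mult_left_mono powr_le_2abs t) auto
    finally show ?thesis .
  qed
  have B: "1 + ln (1 + r) \<le> ln r + 2"
  proof -
    have "ln (1 + r) = ln r + ln t" unfolding rt using r1 t by (simp add: ln_mult)
    moreover have "ln t \<le> t - 1" using t by (intro ln_le_minus_one) auto
    ultimately show ?thesis using t by simp
  qed
  have lr: "ln r \<ge> 0" using r1 by simp
  have "(1 + r) powr l * (M * (1 + ln (1 + r))) \<le> (r powr l * 2 powr \<bar>l\<bar>) * (M * (ln r + 2))"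
    by (rule mult_mono[OF A mult_left_mono[OF B M0]]) (use M0 r1 lr in auto)
  with F have F2: "\<bar>hyp2F1 (-l) (-l) 1 \<sigma>\<bar> \<le> (r powr l * 2 powr \<bar>l\<bar>) * (M * (ln r + 2))" by linarith
  define P where "P = (z - \<eta>) powr l * \<xi> powr l / z powr (2 * l)"
  have P0: "P \<ge> 0" unfolding P_def by simp
  have PQ: "P * r powr l = (\<xi> - z) powr l * \<eta> powr l / z powr (2 * l)"
  proof -
    have "r powr l = ((\<xi> - z) powr l * \<eta> powr l) / ((z - \<eta>) powr l * \<xi> powr l)"
      unfolding r_def using z zx e by (simp add: powr_divide powr_mult)
    moreover have "(z - \<eta>) powr l > 0" "\<xi> powr l > 0" using z e by auto
    ultimately show ?thesis unfolding P_def by (simp add: field_simps)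
  qed
  have "V1 l z \<xi> \<eta> = P * \<bar>hyp2F1 (-l) (-l) 1 \<sigma>\<bar>"
    unfolding V1_def Let_def \<sigma>_def P_def ..
  also have "\<dots> \<le> P * ((r powr l * 2 powr \<bar>l\<bar>) * (M * (ln r + 2)))"
    by (rule mult_left_mono[OF F2 P0])
  also have "\<dots> = (2 powr \<bar>l\<bar> * M) * (P * r powr l) * (ln r + 2)" by (simp add: mult_ac)
  finally have X: "V1 l z \<xi> \<eta> \<le> (2 powr \<bar>l\<bar> * M) * (P * r powr l) * (ln r + 2)" .
  show ?thesis using X unfolding PQ by (simp only: r_def)
qed


lemma P2_ident:
  fixes z \<xi> \<eta> l :: real
  assumes "0 < z" "z < \<eta>" "\<eta> < \<xi>"
  shows "(\<xi> - \<eta>) powr (1 + 2 * l) * z / (\<xi> powr (l + 1) * (\<eta> - z) powr (l + 1))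
       = ((z * (\<xi> - \<eta>)) / (\<xi> * (\<eta> - z))) powr (1 + l) * ((\<xi> - \<eta>) powr l / z powr l)"
proof -
  have a: "((z * (\<xi> - \<eta>)) / (\<xi> * (\<eta> - z))) powr (1 + l)
        = z powr (1 + l) * (\<xi> - \<eta>) powr (1 + l) / (\<xi> powr (1 + l) * (\<eta> - z) powr (1 + l))"
    using assms by (simp add: powr_divide powr_mult)
  have b: "z powr (1 + l) = z * z powr l" using assms by (simp add: powr_add)
  have c: "(\<xi> - \<eta>) powr (1 + 2 * l) = (\<xi> - \<eta>) powr (1 + l) * (\<xi> - \<eta>) powr l"
    by (simp add: powr_add[symmetric] algebra_simps)
  have p: "z powr l > 0" "\<xi> powr (1 + l) > 0" "(\<eta> - z) powr (1 + l) > 0" using assms by auto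
  show ?thesis unfolding a b c using p by (simp add: field_simps add.commute[of l 1])
qed


lemma Kpos: "l > -1 \<Longrightarrow> \<bar>sin (pi * l)\<bar> * (Gamma (1 + l))\<^sup>2 / (pi * Gamma (2 + 2 * l)) \<ge> 0"
  by (intro divide_nonneg_pos mult_nonneg_nonneg mult_pos_pos Gamma_real_pos) auto

lemma part3:
  assumes l: "l > -1"
    and H: "\<And>n. \<bar>hcoef (1 + l) ((2 + 2 * l) - (1 + l)) (2 + 2 * l) n\<bar> \<le> M / (real n + 1)"
    and e: "0 < \<eta>" "\<eta> < \<xi>" and z: "0 < z" "z < \<xi> * \<eta> / (2 * \<xi> - \<eta>)"
  shows "V2 l z \<xi> \<eta> \<le> (\<bar>sin (pi * l)\<bar> * (Gamma (1 + l))\<^sup>2 / (pi * Gamma (2 + 2 * l)) * (2 * M)) *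
     ((\<xi> - \<eta>) powr (1 + 2 * l) * z / (\<xi> powr (1 + l) * (\<eta> - z) powr (1 + l)))"
proof -
  define K where "K = \<bar>sin (pi * l)\<bar> * (Gamma (1 + l))\<^sup>2 / (pi * Gamma (2 + 2 * l))"
  have K0: "K \<ge> 0" unfolding K_def using Kpos[OF l] .
  have M0: "M \<ge> 0" using H[of 0] by (simp add: hcoef_def)
  have d: "2 * \<xi> - \<eta> > 0" using e by simp
  have zz: "z * (2 * \<xi> - \<eta>) < \<xi> * \<eta>" using z(2) d by (simp add: less_divide_eq)
  have ze: "z < \<eta>"
  proof (rule ccontr)
    assume "\<not> z < \<eta>"
    then have "\<eta> * (2 * \<xi> - \<eta>) \<le> z * (2 * \<xi> - \<eta>)" using d by (intro mult_right_mono) auto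
    moreover have "\<eta> * \<eta> < \<eta> * \<xi>" using e by simp
    ultimately show False using zz by (simp add: algebra_simps)
  qed
  define r where "r = (z * (\<xi> - \<eta>)) / (\<xi> * (\<eta> - z))"
  define \<sigma> where "\<sigma> = - (z * (\<xi> - \<eta>)) / (\<xi> * (\<eta> - z))"
  have den: "\<xi> * (\<eta> - z) > 0" using ze e by simp
  have sr: "\<sigma> = - r" unfolding \<sigma>_def r_def by (simp only: minus_divide_left)
  have r0: "r > 0" unfolding r_def using den z e by simp
  have r1: "r < 1"
  proof -
    have "z * (\<xi> - \<eta>) < \<xi> * (\<eta> - z)" using zz by (simp add: algebra_simps)
    then show ?thesis unfolding r_def using den by (simp add: divide_less_eq)
  qed
  have s0: "\<sigma> < 0" using sr r0 by simp
  have F: "\<bar>hyp2F1 (1 + l) (1 + l) (2 + 2 * l) \<sigma>\<bar> \<le> (1 + r) powr (- (1 + l)) * (M * (1 + ln (1 + r)))"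
    using pfaff_bound[where a="1 + l" and b="1 + l" and c="2 + 2 * l" and M=M and \<sigma>=\<sigma>, OF H s0] sr by simp
  have A: "(1 + r) powr (- (1 + l)) \<le> 1"
  proof -
    have "(1 + r) powr (- (1 + l)) \<le> (1 + r) powr 0" using r0 l by (intro powr_mono) auto
    then show ?thesis using r0 by simp
  qed
  have "ln (1 + r) \<le> (1 + r) - 1" using r0 by (intro ln_le_minus_one) auto
  then have B: "1 + ln (1 + r) \<le> 2" using r1 by simp
  have lr: "ln (1 + r) \<ge> 0" using r0 by simp
  have "(1 + r) powr (- (1 + l)) * (M * (1 + ln (1 + r))) \<le> 1 * (M * 2)"
    by (rule mult_mono[OF A mult_left_mono[OF B M0]]) (use M0 lr in auto)
  with F have F2: "\<bar>hyp2F1 (1 + l) (1 + l) (2 + 2 * l) \<sigma>\<bar> \<le> 2 * M" by linarith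
  define P where "P = (\<xi> - \<eta>) powr (1 + 2 * l) * z / (\<xi> powr (l + 1) * (\<eta> - z) powr (l + 1))"
  have P0: "P \<ge> 0" unfolding P_def using z by simp
  have "V2 l z \<xi> \<eta> = K * P * \<bar>hyp2F1 (1 + l) (1 + l) (2 + 2 * l) \<sigma>\<bar>"
    unfolding V2_def Let_def \<sigma>_def P_def K_def ..
  also have "\<dots> \<le> K * P * (2 * M)"
    by (rule mult_left_mono[OF F2]) (use K0 P0 in simp)
  finally show ?thesis unfolding K_def P_def by (simp add: add.commute[of l 1] mult_ac)
qed

lemma part4:
  assumes l: "l > -1"
    and H: "\<And>n. \<bar>hcoef (1 + l) ((2 + 2 * l) - (1 + l)) (2 + 2 * l) n\<bar> \<le> M / (real n + 1)"
    and e: "0 < \<eta>" "\<eta> < \<xi>" and z: "\<xi> * \<eta> / (2 * \<xi> - \<eta>) < z" "z < \<eta>"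
  shows "V2 l z \<xi> \<eta> \<le> (\<bar>sin (pi * l)\<bar> * (Gamma (1 + l))\<^sup>2 / (pi * Gamma (2 + 2 * l)) * M) *
     ((\<xi> - \<eta>) powr l / z powr l) * (ln ((z * (\<xi> - \<eta>)) / (\<xi> * (\<eta> - z))) + 2)"
proof -
  define K where "K = \<bar>sin (pi * l)\<bar> * (Gamma (1 + l))\<^sup>2 / (pi * Gamma (2 + 2 * l))"
  have K0: "K \<ge> 0" unfolding K_def using Kpos[OF l] .
  have M0: "M \<ge> 0" using H[of 0] by (simp add: hcoef_def)
  have d: "2 * \<xi> - \<eta> > 0" using e by simp
  have zz: "\<xi> * \<eta> < z * (2 * \<xi> - \<eta>)" using z(1) d by (simp add: divide_less_eq)
  have z0: "0 < z"
  proof (rule ccontr)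
    assume "\<not> 0 < z"
    then have "z * (2 * \<xi> - \<eta>) \<le> 0" using d by (simp add: mult_nonpos_nonneg)
    moreover have "\<xi> * \<eta> > 0" using e by simp
    ultimately show False using zz by simp
  qed
  define r where "r = (z * (\<xi> - \<eta>)) / (\<xi> * (\<eta> - z))"
  define \<sigma> where "\<sigma> = - (z * (\<xi> - \<eta>)) / (\<xi> * (\<eta> - z))"
  have den: "\<xi> * (\<eta> - z) > 0" using z e by simp
  have sr: "\<sigma> = - r" unfolding \<sigma>_def r_def by (simp only: minus_divide_left)
  have r1: "r > 1"
  proof -
    have "\<xi> * (\<eta> - z) < z * (\<xi> - \<eta>)" using zz by (simp add: algebra_simps)
    then show ?thesis unfolding r_def using den by (simp add: less_divide_eq)
  qed
  have s0: "\<sigma> < 0" using sr r1 by simp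
  have F: "\<bar>hyp2F1 (1 + l) (1 + l) (2 + 2 * l) \<sigma>\<bar> \<le> (1 + r) powr (- (1 + l)) * (M * (1 + ln (1 + r)))"
    using pfaff_bound[where a="1 + l" and b="1 + l" and c="2 + 2 * l" and M=M and \<sigma>=\<sigma>, OF H s0] sr by simp
  have A: "(1 + r) powr (- (1 + l)) \<le> r powr (- (1 + l))"
    using r1 l by (intro powr_mono2') auto
  define t where "t = (1 + r) / r"
  have t: "1 \<le> t" "t \<le> 2" using r1 unfolding t_def by (auto simp: field_simps)
  have rt: "1 + r = r * t" using r1 unfolding t_def by simp
  have B: "1 + ln (1 + r) \<le> ln r + 2"
  proof -
    have "ln (1 + r) = ln r + ln t" unfolding rt using r1 t by (simp add: ln_mult)
    moreover have "ln t \<le> t - 1" using t by (intro ln_le_minus_one) auto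
    ultimately show ?thesis using t by simp
  qed
  have lr: "ln (1 + r) \<ge> 0" using r1 by simp
  have "(1 + r) powr (- (1 + l)) * (M * (1 + ln (1 + r))) \<le> r powr (- (1 + l)) * (M * (ln r + 2))"
    by (rule mult_mono[OF A mult_left_mono[OF B M0]]) (use M0 lr in auto)
  with F have F2: "\<bar>hyp2F1 (1 + l) (1 + l) (2 + 2 * l) \<sigma>\<bar> \<le> r powr (- (1 + l)) * (M * (ln r + 2))" by linarith
  define P where "P = (\<xi> - \<eta>) powr (1 + 2 * l) * z / (\<xi> powr (l + 1) * (\<eta> - z) powr (l + 1))"
  define Q where "Q = (\<xi> - \<eta>) powr l / z powr l"
  have PQ: "P = r powr (1 + l) * Q" unfolding P_def Q_def r_def by (rule P2_ident[OF z0 z(2) e(2)])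
  have P0: "P \<ge> 0" unfolding P_def using z0 by simp
  have rr: "r powr (1 + l) * r powr (- (1 + l)) = 1" using r1 by (simp add: powr_add[symmetric])
  have "V2 l z \<xi> \<eta> = K * P * \<bar>hyp2F1 (1 + l) (1 + l) (2 + 2 * l) \<sigma>\<bar>"
    unfolding V2_def Let_def \<sigma>_def P_def K_def ..
  also have "\<dots> \<le> K * P * (r powr (- (1 + l)) * (M * (ln r + 2)))"
    by (rule mult_left_mono[OF F2]) (use K0 P0 in simp)
  also have "\<dots> = K * Q * (r powr (1 + l) * r powr (- (1 + l))) * M * (ln r + 2)"
    unfolding PQ by (simp add: mult_ac)
  also have "\<dots> = (K * M) * Q * (ln r + 2)" unfolding rr by (simp add: mult_ac)
  finally show ?thesis unfolding K_def Q_def r_def .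
qed


theorem lemmaA1:
  fixes l :: real
  assumes "l \<ge> - 1 / 2"
  shows "\<exists>C1 C2 C3 C4 C5 C6 :: real. \<forall>\<xi> \<eta> :: real. 0 < \<eta> \<and> \<eta> < \<xi> \<longrightarrow>
    (\<forall>z. 2 * \<xi> * \<eta> / (\<xi> + \<eta>) < z \<and> z < \<xi> \<longrightarrow>
       V1 l z \<xi> \<eta> \<le> C1 * ((z - \<eta>) powr l * \<xi> powr l / z powr (2 * l))) \<and>
    (\<forall>z. \<eta> < z \<and> z < 2 * \<xi> * \<eta> / (\<xi> + \<eta>) \<longrightarrow>
       V1 l z \<xi> \<eta> \<le> C2 * ((\<xi> - z) powr l * \<eta> powr l / z powr (2 * l)) *
         (ln (((\<xi> - z) * \<eta>) / ((z - \<eta>) * \<xi>)) + C3)) \<and>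
    (\<forall>z. 0 < z \<and> z < \<xi> * \<eta> / (2 * \<xi> - \<eta>) \<longrightarrow>
       V2 l z \<xi> \<eta> \<le> C4 * ((\<xi> - \<eta>) powr (1 + 2 * l) * z /
         (\<xi> powr (1 + l) * (\<eta> - z) powr (1 + l)))) \<and>
    (\<forall>z. \<xi> * \<eta> / (2 * \<xi> - \<eta>) < z \<and> z < \<eta> \<longrightarrow>
       V2 l z \<xi> \<eta> \<le> C5 * ((\<xi> - \<eta>) powr l / z powr l) *
         (ln ((z * (\<xi> - \<eta>)) / (\<xi> * (\<eta> - z))) + C6))"
proof -
  have l: "l > -1" using assms by simp
  obtain M1 where M1: "\<And>n. \<bar>hcoef (-l) (1 - - l) 1 n\<bar> \<le> M1 / (real n + 1)"
    using hcoef_bound[where a="-l" and b="1 - - l" and c=1] by auto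
  obtain M2 where M2: "\<And>n. \<bar>hcoef (1 + l) ((2 + 2 * l) - (1 + l)) (2 + 2 * l) n\<bar> \<le> M2 / (real n + 1)"
    using hcoef_bound[where a="1 + l" and b="(2 + 2 * l) - (1 + l)" and c="2 + 2 * l"] l by auto
  define K where "K = \<bar>sin (pi * l)\<bar> * (Gamma (1 + l))\<^sup>2 / (pi * Gamma (2 + 2 * l))"
  show ?thesis
    apply (rule exI[of _ "2 powr \<bar>l\<bar> * (M1 * 2)"])
    apply (rule exI[of _ "2 powr \<bar>l\<bar> * M1"])
    apply (rule exI[of _ 2])
    apply (rule exI[of _ "K * (2 * M2)"])
    apply (rule exI[of _ "K * M2"])
    apply (rule exI[of _ 2])
    unfolding K_def
    using part1[OF M1] part2[OF M1] part3[OF l M2] part4[OF l M2]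
    by blast
qed

end
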